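(* Let $\mathfrak{g}$ be a finite-dimensional real Lie algebra, fix a sign $\pm$, and let $\mathbf{M}_{\pm}(q,p) = \mp\operatorname{ad}_q^{*}p$ for $(q,p)\in T^{*}\mathfrak{g}=\mathfrak{g}\times\mathfrak{g}^{*}$. Let $f\colon\mathfrak{g}^{*}\to\mathbb{R}$ be a Casimir of the $(\pm)$-Lie--Poisson bracket $\{f_1,f_2\}_{\pm}(\mu) = \pm\langle\mu,[Df_1(\mu),Df_2(\mu)]\rangle$, define $F := f\circ\mathbf{M}_{\pm}$ and $\gamma\colon T^{*}\mathfrak{g}\to\mathfrak{g}$, $\gamma(q,p) := Df(\mathbf{M}_{\pm}(q,p))$, and consider the $\mathbb{R}$ (Lie algebra) action on $T^{*}\mathfrak{g}$ given by the vector fields $$s_{T^{*}\mathfrak{g}}(q,p) := \big(\pm\operatorname{ad}_{s\gamma(q,p)}q,\ \mp\operatorname{ad}^{*}_{s\gamma(q,p)}p\big),\qquad s\in\mathbb{R}.$$ Then $F$ is the momentum map of this action (i.e. $X_{sF} = s_{T^{*}\mathfrak{g}}$ for all $s$, with $X$ the Hamiltonian vector field for the canonical symplectic structure). Moreover, for any smooth $h\colon\mathfrak{g}^{*}\to\mathbb{R}$, the Hamiltonian $H := h\circ\mathbf{M}_{\pm}$ is infinitesimally invariant under this action, and $F$ is an invariant of the canonical Hamiltonian system $\dot q=\partial H/\partial p$, $\dot p=-\partial H/\partial q$.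
   Context: $\operatorname{ad}_{x}y=[x,y]$, $\operatorname{ad}_{x}^{*}$ is its dual: $\langle \operatorname{ad}_{x}^{*}\alpha, y\rangle = \langle \alpha,[x,y]\rangle$. For smooth $f\colon\mathfrak{g}^{*}\to\mathbb{R}$, $Df(\mu)\in\mathfrak{g}$ is defined by $\langle\delta\mu, Df(\mu)\rangle = \frac{d}{ds}\big|_{s=0}f(\mu+s\delta\mu)$. A Casimir of a Poisson bracket is a function whose bracket with every function vanishes. $T^{*}\mathfrak{g}$ carries the canonical symplectic structure, with Hamiltonian vector field $X_F = (\partial F/\partial p, -\partial F/\partial q)$. *)

theory Defs
  imports "HOL-Analysis.Analysis"
begin

text \<open>The dual space is identified
  with the same space via the inner product, i.e. the pairing is the inner product.\<close>

definition lie_algebra :: "('a::euclidean_space \<Rightarrow> 'a \<Rightarrow> 'a) \<Rightarrow> bool" where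
  "lie_algebra B \<longleftrightarrow> bilinear B \<and> (\<forall>x y. B x y = - B y x) \<and>
     (\<forall>x y z. B x (B y z) + B y (B z x) + B z (B x y) = 0)"

definition ad_star :: "('a::euclidean_space \<Rightarrow> 'a \<Rightarrow> 'a) \<Rightarrow> 'a \<Rightarrow> 'a \<Rightarrow> 'a" where
  "ad_star B x = adjoint (B x)"

definition Dfun :: "('a::euclidean_space \<Rightarrow> real) \<Rightarrow> 'a \<Rightarrow> 'a" where
  "Dfun f mu = (THE v. (f has_derivative (\<lambda>d. d \<bullet> v)) (at mu))"

text \<open>(+/-)-Lie--Poisson bracket, sign sg = 1 or -1.\<close>
definition lie_poisson :: "real \<Rightarrow> ('a::euclidean_space \<Rightarrow> 'a \<Rightarrow> 'a) \<Rightarrow>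
    ('a \<Rightarrow> real) \<Rightarrow> ('a \<Rightarrow> real) \<Rightarrow> 'a \<Rightarrow> real" where
  "lie_poisson sg B f1 f2 mu = sg * (mu \<bullet> B (Dfun f1 mu) (Dfun f2 mu))"

definition casimir :: "real \<Rightarrow> ('a::euclidean_space \<Rightarrow> 'a \<Rightarrow> 'a) \<Rightarrow> ('a \<Rightarrow> real) \<Rightarrow> bool" where
  "casimir sg B f \<longleftrightarrow> (\<forall>k. (\<forall>mu. k differentiable (at mu)) \<longrightarrow>
      (\<forall>mu. lie_poisson sg B f k mu = 0))"

definition momentum :: "real \<Rightarrow> ('a::euclidean_space \<Rightarrow> 'a \<Rightarrow> 'a) \<Rightarrow> 'a \<times> 'a \<Rightarrow> 'a" where
  "momentum sg B z = (- sg) *\<^sub>R ad_star B (fst z) (snd z)"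

definition gam :: "real \<Rightarrow> ('a::euclidean_space \<Rightarrow> 'a \<Rightarrow> 'a) \<Rightarrow> ('a \<Rightarrow> real) \<Rightarrow> 'a \<times> 'a \<Rightarrow> 'a" where
  "gam sg B f z = Dfun f (momentum sg B z)"

definition act_vf :: "real \<Rightarrow> ('a::euclidean_space \<Rightarrow> 'a \<Rightarrow> 'a) \<Rightarrow> ('a \<Rightarrow> real) \<Rightarrow> real \<Rightarrow>
    'a \<times> 'a \<Rightarrow> 'a \<times> 'a" where
  "act_vf sg B f s z = (sg *\<^sub>R B (s *\<^sub>R gam sg B f z) (fst z),
                        (- sg) *\<^sub>R ad_star B (s *\<^sub>R gam sg B f z) (snd z))"

definition ham_vf :: "('a::euclidean_space \<times> 'a \<Rightarrow> real) \<Rightarrow> 'a \<times> 'a \<Rightarrow> 'a \<times> 'a" where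
  "ham_vf G z = (Dfun (\<lambda>p'. G (fst z, p')) (snd z), - Dfun (\<lambda>q'. G (q', snd z)) (fst z))"

end

theory Submission imports Defs begin

lemma Dfun_eq:
  fixes g :: "'a::euclidean_space \<Rightarrow> real"
  assumes "(g has_derivative (\<lambda>d. d \<bullet> v)) (at x)" shows "Dfun g x = v"
  unfolding Dfun_def
proof (rule the_equality)
  fix w assume "(g has_derivative (\<lambda>d. d \<bullet> w)) (at x)"
  then have "(\<lambda>d. d \<bullet> w) = (\<lambda>d. d \<bullet> v)" using assms has_derivative_unique by blast
  then have "(w - v) \<bullet> w = (w - v) \<bullet> v" by metis
  then have "(w - v) \<bullet> (w - v) = 0" by (simp add: inner_diff_right)
  then show "w = v" by simp
qed (rule assms)

lemma Dfun_works:
  fixes g :: "'a::euclidean_space \<Rightarrow> real"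
  assumes "g differentiable (at x)" shows "(g has_derivative (\<lambda>d. d \<bullet> Dfun g x)) (at x)"
proof -
  obtain g' where g': "(g has_derivative g') (at x)" using assms differentiable_def by blast
  have l: "linear g'" using has_derivative_linear[OF g'] .
  have "g' = (\<lambda>d. d \<bullet> adjoint g' 1)"
    using adjoint_works[OF l, of _ 1] by (auto simp: fun_eq_iff)
  with g' have "(g has_derivative (\<lambda>d. d \<bullet> adjoint g' 1)) (at x)" by simp
  with Dfun_eq[OF this] show ?thesis by simp
qed

context
  fixes B :: "'a::euclidean_space \<Rightarrow> 'a \<Rightarrow> 'a"
  assumes LA: "lie_algebra B"
begin

lemma bilB: "bilinear B" using LA unfolding lie_algebra_def by blast
lemma linB2: "linear (B x)"
  using bilB unfolding bilinear_def by (auto simp: fun_eq_iff)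
lemma linB1: "linear (\<lambda>x. B x y)"
  using bilB unfolding bilinear_def by auto
lemma antisym: "B x y = - B y x" using LA unfolding lie_algebra_def by blast
lemma jacobi: "B x (B y z) + B y (B z x) + B z (B x y) = 0" using LA unfolding lie_algebra_def by blast

lemma B_simps[simp]:
  "B (x + y) z = B x z + B y z" "B z (x + y) = B z x + B z y"
  "B (c *\<^sub>R x) z = c *\<^sub>R B x z" "B z (c *\<^sub>R x) = c *\<^sub>R B z x"
  "B (- x) z = - B x z" "B z (- x) = - B z x"
  using linear_add[OF linB1] linear_add[OF linB2] linear_scale[OF linB1] linear_scale[OF linB2]
    linear_neg[OF linB1] linear_neg[OF linB2] by auto

lemma ad_inner[simp]: "ad_star B x a \<bullet> y = a \<bullet> B x y"
  unfolding ad_star_def using adjoint_works[OF linB2, of y x a] by (simp add: inner_commute)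
lemma ad_inner2[simp]: "y \<bullet> ad_star B x a = a \<bullet> B x y"
  using ad_inner by (simp add: inner_commute)

lemma vec_eqI: "(\<And>y. (u::'a) \<bullet> y = w \<bullet> y) \<Longrightarrow> u = w"
  by (metis inner_diff_left inner_eq_zero_iff right_minus_eq)

lemma ad_simps[simp]:
  "ad_star B (x + y) a = ad_star B x a + ad_star B y a"
  "ad_star B x (a + b) = ad_star B x a + ad_star B x b"
  "ad_star B (c *\<^sub>R x) a = c *\<^sub>R ad_star B x a"
  "ad_star B x (c *\<^sub>R a) = c *\<^sub>R ad_star B x a"
  "ad_star B (- x) a = - ad_star B x a"
  "ad_star B x (- a) = - ad_star B x a"
  by (auto intro!: vec_eqI simp: inner_add_left inner_add_right)

lemma bilin_ad: "bounded_bilinear (ad_star B)"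
  unfolding bilinear_conv_bounded_bilinear[symmetric] bilinear_def
  by (auto intro!: linearI)


lemma D_p:
  assumes "\<forall>mu. g differentiable (at mu)"
  shows "Dfun (\<lambda>p'. g (momentum sg B (q,p'))) p = (-sg) *\<^sub>R B q (Dfun g (momentum sg B (q,p)))"
proof -
  let ?L = "\<lambda>p'. (-sg) *\<^sub>R ad_star B q p'"
  let ?g = "Dfun g (?L p)"
  have "linear ?L" by (auto intro!: linearI simp: algebra_simps)
  then have L: "(?L has_derivative ?L) (at p)"
    by (simp add: bounded_linear_imp_has_derivative linear_conv_bounded_linear)
  have G: "(g has_derivative (\<lambda>d. d \<bullet> ?g)) (at (?L p))" using Dfun_works assms by blast
  have "((g \<circ> ?L) has_derivative ((\<lambda>d. d \<bullet> ?g) \<circ> ?L)) (at p)" by (rule diff_chain_at[OF L G])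
  moreover have "((\<lambda>d. d \<bullet> ?g) \<circ> ?L) = (\<lambda>d. d \<bullet> ((-sg) *\<^sub>R B q ?g))" by (auto simp: fun_eq_iff)
  ultimately have "((\<lambda>p'. g (momentum sg B (q,p'))) has_derivative (\<lambda>d. d \<bullet> ((-sg) *\<^sub>R B q ?g))) (at p)"
    by (simp add: momentum_def o_def)
  then show ?thesis unfolding momentum_def fst_conv snd_conv by (rule Dfun_eq)
qed

lemma D_q:
  assumes "\<forall>mu. g differentiable (at mu)"
  shows "Dfun (\<lambda>q'. g (momentum sg B (q',p))) q = sg *\<^sub>R ad_star B (Dfun g (momentum sg B (q,p))) p"
proof -
  let ?L = "\<lambda>q'. (-sg) *\<^sub>R ad_star B q' p"
  let ?g = "Dfun g (?L q)"
  have "linear ?L" by (auto intro!: linearI simp: algebra_simps)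
  then have L: "(?L has_derivative ?L) (at q)"
    by (simp add: bounded_linear_imp_has_derivative linear_conv_bounded_linear)
  have G: "(g has_derivative (\<lambda>d. d \<bullet> ?g)) (at (?L q))" using Dfun_works assms by blast
  have "((g \<circ> ?L) has_derivative ((\<lambda>d. d \<bullet> ?g) \<circ> ?L)) (at q)" by (rule diff_chain_at[OF L G])
  moreover have "((\<lambda>d. d \<bullet> ?g) \<circ> ?L) = (\<lambda>d. d \<bullet> (sg *\<^sub>R ad_star B ?g p))"
  proof (rule ext)
    fix d show "((\<lambda>d. d \<bullet> ?g) \<circ> ?L) d = d \<bullet> (sg *\<^sub>R ad_star B ?g p)"
      using antisym[of d ?g] by simp
  qed
  ultimately have "((\<lambda>q'. g (momentum sg B (q',p))) has_derivative (\<lambda>d. d \<bullet> (sg *\<^sub>R ad_star B ?g p))) (at q)"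
    by (simp add: momentum_def o_def)
  then show ?thesis unfolding momentum_def fst_conv snd_conv by (rule Dfun_eq)
qed

lemma DM: "(momentum sg B has_derivative
   (\<lambda>v. (-sg) *\<^sub>R (ad_star B (fst z) (snd v) + ad_star B (fst v) (snd z)))) (at z)"
proof -
  have "((\<lambda>w. ad_star B (fst w) (snd w)) has_derivative
      (\<lambda>v. ad_star B (fst z) (snd v) + ad_star B (fst v) (snd z))) (at z)"
    by (rule bounded_bilinear.FDERIV[OF bilin_ad]) (auto intro: has_derivative_fst has_derivative_snd)
  then show ?thesis unfolding momentum_def by (rule has_derivative_scaleR_right)
qed

lemma casimir_ad:
  assumes "casimir sg B f" "sg \<noteq> 0"
  shows "mu \<bullet> B (Dfun f mu) y = 0"
proof -
  have d: "((\<lambda>x. x \<bullet> y) has_derivative (\<lambda>d. d \<bullet> y)) (at x)" for x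
    by (rule bounded_linear_imp_has_derivative) (rule bounded_linear_inner_left)
  then have "(\<lambda>x. x \<bullet> y) differentiable (at x)" for x by (auto simp: differentiable_def)
  with assms(1) have "lie_poisson sg B f (\<lambda>x. x \<bullet> y) mu = 0" unfolding casimir_def by blast
  moreover have "Dfun (\<lambda>x. x \<bullet> y) mu = y" using Dfun_eq[OF d] .
  ultimately show ?thesis using assms(2) unfolding lie_poisson_def by simp
qed
end

theorem proposition4p4:
  fixes B :: "'a::euclidean_space \<Rightarrow> 'a \<Rightarrow> 'a" and sg :: real and f h :: "'a \<Rightarrow> real"
  assumes "lie_algebra B"
    and "sg = 1 \<or> sg = -1"
    and "\<forall>mu. f differentiable (at mu)"
    and "casimir sg B f"
    and "\<forall>mu. h differentiable (at mu)"
  shows "(\<forall>s z. ham_vf (\<lambda>w. s * f (momentum sg B w)) z = act_vf sg B f s z)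
       \<and> (\<forall>s z. frechet_derivative (\<lambda>w. h (momentum sg B w)) (at z) (act_vf sg B f s z) = 0)
       \<and> (\<forall>c :: real \<Rightarrow> 'a \<times> 'a.
            (\<forall>t. (c has_vector_derivative ham_vf (\<lambda>w. h (momentum sg B w)) (c t)) (at t)) \<longrightarrow>
            (\<forall>t1 t2. f (momentum sg B (c t1)) = f (momentum sg B (c t2))))"
proof -
  note LA = assms(1)
  have sg0: "sg \<noteq> 0" and sg2: "sg * sg = 1" using assms(2) by auto
  have cas: "mu \<bullet> B (Dfun f mu) y = 0" for mu y using casimir_ad[OF LA assms(4) sg0] .
  have cas2: "p \<bullet> B q (B (Dfun f (momentum sg B (q,p))) y) = 0" for q p y
  proof -
    have "momentum sg B (q,p) \<bullet> B (Dfun f (momentum sg B (q,p))) y = 0" by (rule cas)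
    then show ?thesis using sg0 by (simp add: momentum_def ad_inner[OF LA])
  qed
  note simps = B_simps[OF LA] ad_simps[OF LA] ad_inner[OF LA] ad_inner2[OF LA]
  have P1: "ham_vf (\<lambda>w. s * f (momentum sg B w)) z = act_vf sg B f s z" for s z
  proof -
    obtain q p where z: "z = (q,p)" by fastforce
    let ?g = "Dfun f (momentum sg B (q,p))"
    have ds: "\<forall>mu. (\<lambda>x. s * f x) differentiable (at mu)" using assms(3) by auto
    have Dsf: "Dfun (\<lambda>x. s * f x) mu = s *\<^sub>R Dfun f mu" for mu
    proof (rule Dfun_eq)
      have "((\<lambda>x. s * f x) has_derivative (\<lambda>d. s * (d \<bullet> Dfun f mu))) (at mu)"
        using Dfun_works assms(3) has_derivative_mult_right by blast
      then show "((\<lambda>x. s * f x) has_derivative (\<lambda>d. d \<bullet> (s *\<^sub>R Dfun f mu))) (at mu)"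
        by (rule has_derivative_eq_rhs) auto
    qed
    have "ham_vf (\<lambda>w. s * f (momentum sg B w)) z =
       (Dfun (\<lambda>p'. s * f (momentum sg B (q,p'))) p, - Dfun (\<lambda>q'. s * f (momentum sg B (q',p))) q)"
      by (simp add: ham_vf_def z)
    also have "\<dots> = ((-sg) *\<^sub>R B q (s *\<^sub>R ?g), - (sg *\<^sub>R ad_star B (s *\<^sub>R ?g) p))"
    proof -
      have 1: "Dfun (\<lambda>p'. s * f (momentum sg B (q,p'))) p = (-sg) *\<^sub>R B q (Dfun (\<lambda>x. s * f x) (momentum sg B (q,p)))"
        using D_p[OF LA ds, where q=q and p=p and sg=sg] by simp
      have 2: "Dfun (\<lambda>q'. s * f (momentum sg B (q',p))) q = sg *\<^sub>R ad_star B (Dfun (\<lambda>x. s * f x) (momentum sg B (q,p))) p"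
        using D_q[OF LA ds, where q=q and p=p and sg=sg] by simp
      show ?thesis unfolding 1 2 Dsf by simp
    qed
    also have "\<dots> = act_vf sg B f s z"
      using antisym[OF LA, of q ?g] by (simp add: act_vf_def gam_def z simps)
    finally show ?thesis .
  qed
  have P2: "frechet_derivative (\<lambda>w. h (momentum sg B w)) (at z) (act_vf sg B f s z) = 0" for s z
  proof -
    obtain q p where z: "z = (q,p)" by fastforce
    let ?g = "Dfun f (momentum sg B (q,p))"
    let ?e = "Dfun h (momentum sg B z)"
    let ?DM = "\<lambda>v. (-sg) *\<^sub>R (ad_star B (fst z) (snd v) + ad_star B (fst v) (snd z))"
    have "((h \<circ> momentum sg B) has_derivative ((\<lambda>d. d \<bullet> ?e) \<circ> ?DM)) (at z)"
      by (rule diff_chain_at[OF DM[OF LA] Dfun_works]) (use assms(5) in blast)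
    then have fd: "frechet_derivative (\<lambda>w. h (momentum sg B w)) (at z) = (\<lambda>v. ?DM v \<bullet> ?e)"
        unfolding comp_def by (rule frechet_derivative_at[symmetric])
    have J: "p \<bullet> B ?g (B q ?e) + p \<bullet> B q (B ?e ?g) + p \<bullet> B ?e (B ?g q) = 0"
      using arg_cong[OF jacobi[OF LA, of ?g q ?e], of "\<lambda>v. p \<bullet> v"] by (simp add: inner_add_right)
    have a1: "B (B ?g q) ?e = - B ?e (B ?g q)" by (rule antisym[OF LA])
    have a2: "B ?e ?g = - B ?g ?e" by (rule antisym[OF LA])
    have c: "p \<bullet> B q (B ?g ?e) = 0" by (rule cas2)
    have XY: "p \<bullet> B ?g (B q ?e) + p \<bullet> B ?e (B ?g q) = 0" using J a2 c by (simp add: simps)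
    have "(sg * s) * (p \<bullet> B (B ?g q) ?e) - (sg * s) * (p \<bullet> B ?g (B q ?e)) = - (sg * s) * (p \<bullet> B ?g (B q ?e) + p \<bullet> B ?e (B ?g q))"
      using a1 by (simp add: algebra_simps)
    also have "\<dots> = 0" using XY by simp
    finally have Z: "(sg * s) * (p \<bullet> B (B ?g q) ?e) - (sg * s) * (p \<bullet> B ?g (B q ?e)) = 0" .
    show ?thesis unfolding fd using Z
      by (simp add: act_vf_def gam_def z simps inner_add_left inner_diff_left)
  qed
  have P3: "f (momentum sg B (c t1)) = f (momentum sg B (c t2))"
    if hc: "\<forall>t. (c has_vector_derivative ham_vf (\<lambda>w. h (momentum sg B w)) (c t)) (at t)" for c t1 t2
  proof -
    have "DERIV (\<lambda>t. f (momentum sg B (c t))) t :> 0" for t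
    proof -
      obtain q p where z: "c t = (q,p)" by fastforce
      let ?g = "Dfun f (momentum sg B (q,p))"
      let ?e = "Dfun h (momentum sg B (q,p))"
      let ?V = "ham_vf (\<lambda>w. h (momentum sg B w)) (c t)"
      let ?DM = "\<lambda>v. (-sg) *\<^sub>R (ad_star B (fst (c t)) (snd v) + ad_star B (fst v) (snd (c t)))"
      have V: "?V = ((-sg) *\<^sub>R B q ?e, - (sg *\<^sub>R ad_star B ?e p))"
        using D_p[OF LA assms(5), where q=q and p=p and sg=sg] D_q[OF LA assms(5), where q=q and p=p and sg=sg]
        by (simp add: ham_vf_def z)
      have c': "(c has_derivative (\<lambda>r. r *\<^sub>R ?V)) (at t)" using hc has_vector_derivative_def by blast
      have mc: "((momentum sg B \<circ> c) has_derivative (?DM \<circ> (\<lambda>r. r *\<^sub>R ?V))) (at t)"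
        by (rule diff_chain_at[OF c' DM[OF LA]])
      have fmc: "((f \<circ> (momentum sg B \<circ> c)) has_derivative ((\<lambda>d. d \<bullet> ?g) \<circ> (?DM \<circ> (\<lambda>r. r *\<^sub>R ?V)))) (at t)"
        by (rule diff_chain_at[OF mc]) (use Dfun_works assms(3) z in auto)
      have J: "p \<bullet> B ?g (B q ?e) + p \<bullet> B q (B ?e ?g) + p \<bullet> B ?e (B ?g q) = 0"
        using arg_cong[OF jacobi[OF LA, of ?g q ?e], of "\<lambda>v. p \<bullet> v"] by (simp add: inner_add_right)
      have a1: "B (B q ?e) ?g = - B ?g (B q ?e)" by (rule antisym[OF LA])
      have a2: "B ?e ?g = - B ?g ?e" by (rule antisym[OF LA])
      have a3: "B q ?g = - B ?g q" by (rule antisym[OF LA])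
      have cc: "p \<bullet> B q (B ?g ?e) = 0" by (rule cas2)
      have K: "p \<bullet> B (B q ?e) ?g + p \<bullet> B ?e (B q ?g) = 0" using J a1 a2 a3 cc by (simp add: simps)
      have V': "ham_vf (\<lambda>w. h (momentum sg B w)) (q,p) = ((-sg) *\<^sub>R B q ?e, - (sg *\<^sub>R ad_star B ?e p))"
        using V z by simp
      have "?DM ?V \<bullet> ?g = 0" using K sg2 unfolding z
        by (simp add: simps inner_add_left V' algebra_simps)
      moreover have "?DM (r *\<^sub>R ?V) = r *\<^sub>R ?DM ?V" for r
        by (simp add: simps algebra_simps)
      ultimately have "((\<lambda>d. d \<bullet> ?g) \<circ> (?DM \<circ> (\<lambda>r. r *\<^sub>R ?V))) = (\<lambda>r. 0 * r)"
        by (simp add: fun_eq_iff del: scaleR_add_right)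
      moreover have z0: "((*) (0::real)) = (\<lambda>r. 0)" by (simp add: fun_eq_iff)
      ultimately show ?thesis using fmc unfolding has_field_derivative_def z0 by (simp add: o_def)
    qed
    then show ?thesis using DERIV_isconst_all[of "\<lambda>t. f (momentum sg B (c t))" t1 t2] by blast
  qed
  show ?thesis using P1 P2 P3 by blast
qed
end
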